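(* Let $\phi$ be a $\gamma$-leaky, $H$-smooth activation, $R=\max_{i,j}\|x_i\|/\|x_j\|$, $C_R=10R^2\gamma^{-2}+10$, and suppose for all $i\in[n]$, $\|x_i\|^2\ge5\gamma^{-2}C_Rn\max_{k\ne i}|\langle x_i,x_k\rangle|$. Let $\delta\in(0,1)$ and assume (A1) $\alpha\le\gamma^2(5nR_{\max}^2R^2C_R\max(1,H))^{-1}$ and (A2) $\omega_{\mathrm{init}}\le\alpha\gamma^2R_{\min}(72RC_Rn\sqrt{md\log(4m/\delta)})^{-1}$. Then with probability at least $1-\delta$ over initialization, the gradient descent iterates satisfy $$\sup_{t\ge0}\ \max_{i,j\in[n]}\frac{\ell'(y_if(x_i;W^{(t)}))}{\ell'(y_jf(x_j;W^{(t)}))}\le C_R.$$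
   Context: Network: $f(x;W)=\sum_{j=1}^ma_j\phi(\langle w_j,x\rangle)$, $W\in\mathbb{R}^{m\times d}$ with rows $w_j$, fixed $a_j\in\{\pm1/\sqrt m\}$. $\phi$ is $\gamma$-leaky, $H$-smooth ($\gamma\in(0,1]$, $H>0$) if $\phi(0)=0$, $\phi$ twice differentiable, $\gamma\le\phi'\le1$, $|\phi''|\le H$. Logistic loss $\ell(z)=\log(1+e^{-z})$, $\hat L(W)=\frac1n\sum_i\ell(y_if(x_i;W))$. Gradient descent: $W^{(0)}$ with i.i.d. $\mathsf N(0,\omega_{\mathrm{init}}^2)$ entries, $W^{(t+1)}=W^{(t)}-\alpha\nabla\hat L(W^{(t)})$. $R_{\max}=\max_i\|x_i\|$, $R_{\min}=\min_i\|x_i\|$. *)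

theory Defs
  imports "HOL-Probability.Probability"
begin

definition leaky_smooth :: "(real \<Rightarrow> real) \<Rightarrow> real \<Rightarrow> real \<Rightarrow> bool" where
  "leaky_smooth \<phi> \<gamma> H \<longleftrightarrow> 0 < \<gamma> \<and> \<gamma> \<le> 1 \<and> 0 < H \<and> \<phi> 0 = 0 \<and>
     (\<forall>z. \<phi> differentiable at z) \<and> (\<forall>z. deriv \<phi> differentiable at z) \<and>
     (\<forall>z. \<gamma> \<le> deriv \<phi> z \<and> deriv \<phi> z \<le> 1) \<and>
     (\<forall>z. \<bar>deriv (deriv \<phi>) z\<bar> \<le> H)"

definition logistic :: "real \<Rightarrow> real" where
  "logistic z = ln (1 + exp (- z))"

definition net :: "(real \<Rightarrow> real) \<Rightarrow> ('m::finite \<Rightarrow> real) \<Rightarrow> real^'d^'m \<Rightarrow> real^'d \<Rightarrow> real" where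
  "net \<phi> a W x = (\<Sum>j\<in>UNIV. a j * \<phi> ((W $ j) \<bullet> x))"

definition emp_risk :: "(real \<Rightarrow> real) \<Rightarrow> ('m::finite \<Rightarrow> real) \<Rightarrow> nat \<Rightarrow> (nat \<Rightarrow> real^'d)
     \<Rightarrow> (nat \<Rightarrow> real) \<Rightarrow> real^'d^'m \<Rightarrow> real" where
  "emp_risk \<phi> a n x y W = (1 / real n) * (\<Sum>i<n. logistic (y i * net \<phi> a W (x i)))"

definition gradient :: "('a::real_inner \<Rightarrow> real) \<Rightarrow> 'a \<Rightarrow> 'a" where
  "gradient L W = (THE D. GDERIV L W :> D)"

fun gd_iter :: "('a::real_inner \<Rightarrow> real) \<Rightarrow> real \<Rightarrow> 'a \<Rightarrow> nat \<Rightarrow> 'a" where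
  "gd_iter L \<alpha> W0 0 = W0"
| "gd_iter L \<alpha> W0 (Suc t) = gd_iter L \<alpha> W0 t - \<alpha> *\<^sub>R gradient L (gd_iter L \<alpha> W0 t)"

text \<open>Initialization distribution: i.i.d. N(0, omega^2) entries.\<close>
definition init_measure :: "real \<Rightarrow> (real^'d^'m) measure" where
  "init_measure \<omega> =
     distr (PiM (UNIV :: ('m \<times> 'd) set) (\<lambda>_. density lborel (normal_density 0 \<omega>)))
           borel (\<lambda>f. \<chi> j k. f (j, k))"

end

theory Submission
  imports Defs
begin


definition gg :: "real \<Rightarrow> real" where "gg z = 1 / (1 + exp z)"

lemma DERIV_logistic: "DERIV logistic z :> - gg z"
proof -
  have "DERIV (\<lambda>z. ln (1 + exp (- z))) z :> (1 / (1 + exp (-z))) * (exp (-z) * (-1))"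
    by (auto intro!: derivative_eq_intros simp: add_pos_pos)
  moreover have "(1 / (1 + exp (-z))) * (exp (-z) * (-1)) = - gg z"
    by (simp add: gg_def exp_minus field_simps add_pos_pos)
  ultimately show ?thesis unfolding logistic_def[abs_def] by simp
qed

lemma deriv_logistic: "deriv logistic z = - gg z"
  using DERIV_logistic DERIV_imp_deriv by blast

lemma gderiv_sum:
  assumes "finite S" "\<And>i. i \<in> S \<Longrightarrow> GDERIV (f i) x :> D i"
  shows "GDERIV (\<lambda>x. \<Sum>i\<in>S. f i x) x :> (\<Sum>i\<in>S. D i)"
  using assms
proof (induction S rule: finite_induct)
  case empty then show ?case by (simp add: GDERIV_const)
next
  case (insert a S) then show ?case by (simp add: GDERIV_add)
qed

lemma gderiv_cmult:
  assumes "GDERIV f x :> D" shows "GDERIV (\<lambda>x. c * f x) x :> c *\<^sub>R D"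
proof -
  have "DERIV (\<lambda>u. c * u) (f x) :> c" by (auto intro!: derivative_eq_intros)
  from GDERIV_DERIV_compose[OF assms this] show ?thesis .
qed

lemma gderiv_row:
  "GDERIV (\<lambda>W::real^'n^'m. W$j \<bullet> v) W :> axis j v"
proof -
  have "bounded_linear (\<lambda>W::real^'n^'m. W$j \<bullet> v)"
    using bounded_linear_compose[OF bounded_linear_inner_left bounded_linear_vec_nth] by blast
  then have "((\<lambda>W::real^'n^'m. W$j \<bullet> v) has_derivative (\<lambda>W. W$j \<bullet> v)) (at W)"
    by (rule bounded_linear.has_derivative[OF _ has_derivative_ident])
  then show ?thesis unfolding gderiv_def by (simp add: inner_axis)
qed

definition grad_net :: "(real \<Rightarrow> real) \<Rightarrow> ('m::finite \<Rightarrow> real) \<Rightarrow> nat \<Rightarrow> (nat \<Rightarrow> real^'d)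
     \<Rightarrow> (nat \<Rightarrow> real) \<Rightarrow> real^'d^'m \<Rightarrow> real^'d^'m" where
  "grad_net \<phi> a n x y W = (1 / real n) *\<^sub>R (\<Sum>i<n. (- gg (y i * net \<phi> a W (x i))) *\<^sub>R
       (y i *\<^sub>R (\<Sum>j\<in>UNIV. a j *\<^sub>R (deriv \<phi> (W$j \<bullet> x i) *\<^sub>R axis j (x i)))))"

lemma GDERIV_emp_risk:
  assumes dphi: "\<And>z. \<phi> differentiable at z"
  shows "GDERIV (emp_risk \<phi> a n x y) W :> grad_net \<phi> a n x y W"
proof -
  have phi: "DERIV \<phi> z :> deriv \<phi> z" for z
    using dphi DERIV_deriv_iff_real_differentiable by blast
  have net: "GDERIV (\<lambda>W. net \<phi> a W v) W :> (\<Sum>j\<in>UNIV. a j *\<^sub>R (deriv \<phi> (W$j \<bullet> v) *\<^sub>R axis j v))" for v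
    unfolding net_def
    by (intro gderiv_sum gderiv_cmult GDERIV_DERIV_compose[OF gderiv_row phi]) auto
  have "GDERIV (\<lambda>W. (1 / real n) * (\<Sum>i<n. logistic (y i * net \<phi> a W (x i)))) W :> grad_net \<phi> a n x y W"
    unfolding grad_net_def
    by (intro gderiv_cmult gderiv_sum GDERIV_DERIV_compose[OF gderiv_cmult[OF net] DERIV_logistic]) auto
  then show ?thesis unfolding emp_risk_def[abs_def] by simp
qed

lemma gradient_emp_risk:
  assumes dphi: "\<And>z. \<phi> differentiable at z"
  shows "gradient (emp_risk \<phi> a n x y) W = grad_net \<phi> a n x y W"
proof -
  have u: "D = grad_net \<phi> a n x y W" if "GDERIV (emp_risk \<phi> a n x y) W :> D" for D
  proof -
    have "(\<lambda>h. h \<bullet> D) = (\<lambda>h. h \<bullet> grad_net \<phi> a n x y W)"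
      using has_derivative_unique that GDERIV_emp_risk[OF dphi] unfolding gderiv_def by blast
    then have "(D - grad_net \<phi> a n x y W) \<bullet> D = (D - grad_net \<phi> a n x y W) \<bullet> grad_net \<phi> a n x y W"
      by metis
    then have "(D - grad_net \<phi> a n x y W) \<bullet> (D - grad_net \<phi> a n x y W) = 0"
      by (simp add: inner_diff_right)
    then show ?thesis by simp
  qed
  show ?thesis unfolding gradient_def
    using GDERIV_emp_risk[OF dphi] u by (intro the_equality) auto
qed

lemma grad_net_nth:
  fixes W :: "real^'d^'m::finite" and x :: "nat \<Rightarrow> real^'d"
  shows "(grad_net \<phi> a n x y W)$j = (\<Sum>i<n. ((1 / real n) * (- gg (y i * net \<phi> a W (x i))) * y i * a j * deriv \<phi> (W$j \<bullet> x i)) *\<^sub>R x i)"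
proof -
  have ax: "(\<Sum>j'\<in>UNIV. a j' *\<^sub>R (deriv \<phi> (W$j' \<bullet> v) *\<^sub>R axis j' v)) $ j = (a j * deriv \<phi> (W$j \<bullet> v)) *\<^sub>R v" for v :: "real^'d"
  proof -
    have "(\<Sum>j'\<in>UNIV. a j' *\<^sub>R (deriv \<phi> (W$j' \<bullet> v) *\<^sub>R axis j' v)) $ j
        = (\<Sum>j'\<in>UNIV. (if j = j' then (a j * deriv \<phi> (W$j \<bullet> v)) *\<^sub>R v else 0))"
      unfolding sum_component by (intro sum.cong refl) (auto simp: axis_def)
    also have "\<dots> = (a j * deriv \<phi> (W$j \<bullet> v)) *\<^sub>R v" by simp
    finally show ?thesis .
  qed
  have ax': "(\<Sum>j'\<in>UNIV. a j' *\<^sub>R (deriv \<phi> (W$j' \<bullet> v) *\<^sub>R (axis j' v $ j))) = (a j * deriv \<phi> (W$j \<bullet> v)) *\<^sub>R v" for v :: "real^'d"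
    using ax[of v] by simp
  have "(grad_net \<phi> a n x y W)$j = (1 / real n) *\<^sub>R (\<Sum>i<n. (- gg (y i * net \<phi> a W (x i))) *\<^sub>R
       (y i *\<^sub>R ((a j * deriv \<phi> (W$j \<bullet> x i)) *\<^sub>R x i)))"
    by (simp only: grad_net_def vector_scaleR_component sum_component ax')
  also have "\<dots> = (\<Sum>i<n. ((1 / real n) * (- gg (y i * net \<phi> a W (x i))) * y i * a j * deriv \<phi> (W$j \<bullet> x i)) *\<^sub>R x i)"
    by (simp add: scaleR_sum_right mult.assoc)
  finally show ?thesis .
qed

lemma phi_mvt:
  assumes act: "leaky_smooth \<phi> \<gamma> H"
  shows "\<exists>c. \<gamma> \<le> c \<and> c \<le> 1 \<and> \<phi> v - \<phi> u = c * (v - u)"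
proof -
  have d: "DERIV \<phi> z :> deriv \<phi> z" for z
    using act DERIV_deriv_iff_real_differentiable unfolding leaky_smooth_def by blast
  have b: "\<gamma> \<le> deriv \<phi> z \<and> deriv \<phi> z \<le> 1" for z using act unfolding leaky_smooth_def by blast
  consider "u < v" | "u = v" | "v < u" by linarith
  then show ?thesis
  proof cases
    case 1
    then obtain z where "\<phi> v - \<phi> u = (v - u) * deriv \<phi> z" using MVT2[of u v \<phi> "deriv \<phi>"] d by blast
    then show ?thesis using b[of z] by (metis mult.commute)
  next
    case 2 then show ?thesis using act unfolding leaky_smooth_def by auto
  next
    case 3
    then obtain z where "\<phi> u - \<phi> v = (u - v) * deriv \<phi> z" using MVT2[of v u \<phi> "deriv \<phi>"] d by blast
    then have "\<phi> v - \<phi> u = deriv \<phi> z * (v - u)" by (simp add: algebra_simps)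
    then show ?thesis using b[of z] by blast
  qed
qed

lemma per_j:
  fixes c p g N X E \<gamma> :: real
  assumes "\<gamma> \<le> c" "c \<le> 1" "\<gamma> \<le> p" "p \<le> 1" "0 < \<gamma>" "0 \<le> g" "0 \<le> N" "\<bar>E\<bar> \<le> X"
  shows "\<gamma>^2 * g * N - X \<le> c * (g * p * N + E)" "c * (g * p * N + E) \<le> g * N + X"
proof -
  have X: "0 \<le> X" using assms by linarith
  have "\<gamma>^2 \<le> c * p" using assms by (simp add: power2_eq_square mult_mono)
  then have "\<gamma>^2 * (g * N) \<le> c * p * (g * N)" using assms by (intro mult_right_mono) auto
  moreover have "- X \<le> c * E"
  proof -
    have "\<bar>c * E\<bar> \<le> 1 * X" unfolding abs_mult using assms by (intro mult_mono) auto
    then show ?thesis by linarith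
  qed
  ultimately show "\<gamma>^2 * g * N - X \<le> c * (g * p * N + E)" by (simp add: algebra_simps)
  have "c * p \<le> 1" using assms by (metis mult_le_one order.trans less_imp_le)
  then have "c * p * (g * N) \<le> 1 * (g * N)" using assms by (intro mult_right_mono) auto
  moreover have "c * E \<le> X"
  proof -
    have "\<bar>c * E\<bar> \<le> 1 * X" unfolding abs_mult using assms by (intro mult_mono) auto
    then show ?thesis by linarith
  qed
  ultimately show "c * (g * p * N + E) \<le> g * N + X" by (simp add: algebra_simps)
qed

lemma gg_pos: "0 < gg z" unfolding gg_def by (simp add: add_pos_pos)
lemma gg_le1: "gg z < 1"
proof -
  have "1 < 1 + exp z" "0 < 1 + exp z" by (simp_all add: add_pos_pos)
  then show ?thesis unfolding gg_def by (simp add: divide_less_eq)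
qed

lemma margin_step:
  fixes W :: "real^'d^'m::finite" and x :: "nat \<Rightarrow> real^'d"
  assumes act: "leaky_smooth \<phi> \<gamma> H"
    and a2: "\<forall>j. (a j)^2 = 1 / real CARD('m)"
    and y: "\<forall>i<n. y i = 1 \<or> y i = -1"
    and k: "k < n"
    and alpha: "0 \<le> \<alpha>"
    and W': "W' = W - \<alpha> *\<^sub>R gradient (emp_risk \<phi> a n x y) W"
    and X: "X = (\<Sum>i\<in>{..<n}-{k}. gg (y i * net \<phi> a W (x i)) * \<bar>x i \<bullet> x k\<bar>)"
  shows "\<alpha> / real n * (\<gamma>^2 * gg (y k * net \<phi> a W (x k)) * (x k \<bullet> x k) - X)
           \<le> y k * net \<phi> a W' (x k) - y k * net \<phi> a W (x k)"
    and "y k * net \<phi> a W' (x k) - y k * net \<phi> a W (x k)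
           \<le> \<alpha> / real n * (gg (y k * net \<phi> a W (x k)) * (x k \<bullet> x k) + X)"
proof -
  define G where "G i = gg (y i * net \<phi> a W (x i))" for i
  define p where "p i j = deriv \<phi> (W$j \<bullet> x i)" for i j
  define P where "P i = x i \<bullet> x k" for i
  define N where "N = x k \<bullet> x k"
  define T where "T j = (\<Sum>i<n. G i * y k * y i * p i j * P i)" for j
  define m where "m = real CARD('m)"
  have m: "m > 0" unfolding m_def by simp
  have dphi: "\<And>z. \<phi> differentiable at z" and pb: "\<And>z. \<gamma> \<le> deriv \<phi> z \<and> deriv \<phi> z \<le> 1"
    and g0: "0 < \<gamma>"
    using act unfolding leaky_smooth_def by auto
  have d: "W'$j \<bullet> x k - W$j \<bullet> x k = \<alpha> / real n * a j * (\<Sum>i<n. G i * y i * p i j * P i)" for j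
  proof -
    have "W'$j \<bullet> x k - W$j \<bullet> x k = - \<alpha> * ((grad_net \<phi> a n x y W)$j \<bullet> x k)"
      unfolding W' gradient_emp_risk[OF dphi] by (simp add: inner_diff_left)
    also have "\<dots> = - \<alpha> * (\<Sum>i<n. ((1 / real n) * (- G i) * y i * a j * p i j) * P i)"
      unfolding grad_net_nth inner_sum_left inner_scaleR_left G_def p_def P_def by simp
    also have "\<dots> = \<alpha> / real n * a j * (\<Sum>i<n. G i * y i * p i j * P i)"
      by (simp add: sum_distrib_left algebra_simps)
    finally show ?thesis .
  qed
  have "\<forall>j. \<exists>c. \<gamma> \<le> c \<and> c \<le> 1 \<and> \<phi> (W'$j \<bullet> x k) - \<phi> (W$j \<bullet> x k) = c * (W'$j \<bullet> x k - W$j \<bullet> x k)"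
    using phi_mvt[OF act] by blast
  then obtain c where c: "\<And>j. \<gamma> \<le> c j" "\<And>j. c j \<le> 1"
     "\<And>j. \<phi> (W'$j \<bullet> x k) - \<phi> (W$j \<bullet> x k) = c j * (W'$j \<bullet> x k - W$j \<bullet> x k)"
    by metis
  have yk: "y k * y k = 1" using y k by auto
  have diff: "y k * net \<phi> a W' (x k) - y k * net \<phi> a W (x k) = \<alpha> / real n * (1 / m) * (\<Sum>j\<in>UNIV. c j * T j)"
  proof -
    have "y k * net \<phi> a W' (x k) - y k * net \<phi> a W (x k)
        = (\<Sum>j\<in>UNIV. y k * a j * (\<phi> (W'$j \<bullet> x k) - \<phi> (W$j \<bullet> x k)))"
      unfolding net_def by (simp add: sum_distrib_left sum_subtractf[symmetric] algebra_simps)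
    also have "\<dots> = (\<Sum>j\<in>UNIV. \<alpha> / real n * (1 / m) * (c j * T j))"
    proof (intro sum.cong refl)
      fix j
      have "y k * a j * (\<phi> (W'$j \<bullet> x k) - \<phi> (W$j \<bullet> x k)) = (a j)^2 * (\<alpha> / real n) * c j * (\<Sum>i<n. y k * (G i * y i * p i j * P i))"
        unfolding c(3) d by (simp add: power2_eq_square sum_distrib_left algebra_simps)
      also have "\<dots> = \<alpha> / real n * (1 / m) * (c j * T j)"
        unfolding T_def using a2 by (simp add: m_def algebra_simps)
      finally show "y k * a j * (\<phi> (W'$j \<bullet> x k) - \<phi> (W$j \<bullet> x k)) = \<alpha> / real n * (1 / m) * (c j * T j)" .
    qed
    also have "\<dots> = \<alpha> / real n * (1 / m) * (\<Sum>j\<in>UNIV. c j * T j)"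
      by (simp add: sum_distrib_left)
    finally show ?thesis .
  qed
  have Tb: "\<gamma>^2 * G k * N - X \<le> c j * T j \<and> c j * T j \<le> G k * N + X" for j
  proof -
    define E where "E = (\<Sum>i\<in>{..<n}-{k}. G i * y k * y i * p i j * P i)"
    have TE: "T j = G k * p k j * N + E"
      unfolding T_def E_def using k
      by (simp add: sum.remove[of "{..<n}" k] yk N_def P_def algebra_simps)
    have "\<bar>E\<bar> \<le> (\<Sum>i\<in>{..<n}-{k}. \<bar>G i * y k * y i * p i j * P i\<bar>)"
      unfolding E_def by (rule sum_abs)
    also have "\<dots> \<le> X"
      unfolding X
    proof (intro sum_mono)
      fix i assume i: "i \<in> {..<n} - {k}"
      have "\<bar>y k\<bar> = 1" "\<bar>y i\<bar> = 1" using y k i by auto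
      then have "\<bar>y k * y i * p i j\<bar> \<le> 1"
        using pb[of "W$j \<bullet> x i"] g0 unfolding p_def by (auto simp: abs_mult)
      then have "\<bar>y k * y i * p i j\<bar> * (G i * \<bar>P i\<bar>) \<le> 1 * (G i * \<bar>P i\<bar>)"
        using gg_pos[of "y i * net \<phi> a W (x i)"] unfolding G_def by (intro mult_right_mono) auto
      moreover have "\<bar>G i * y k * y i * p i j * P i\<bar> = \<bar>y k * y i * p i j\<bar> * (G i * \<bar>P i\<bar>)"
        using gg_pos[of "y i * net \<phi> a W (x i)"] unfolding G_def by (simp add: abs_mult)
      ultimately show "\<bar>G i * y k * y i * p i j * P i\<bar> \<le> gg (y i * net \<phi> a W (x i)) * \<bar>x i \<bullet> x k\<bar>"
        unfolding G_def P_def by simp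
    qed
    finally have "\<bar>E\<bar> \<le> X" .
    then show ?thesis unfolding TE
      using per_j[where c="c j" and p="p k j" and g="G k" and N=N and X=X and E=E and \<gamma>=\<gamma>] c pb g0 gg_pos[of "y k * net \<phi> a W (x k)"]
      unfolding G_def p_def N_def by auto
  qed
  have s1: "m * (\<gamma>^2 * G k * N - X) \<le> (\<Sum>j\<in>UNIV. c j * T j)"
  proof -
    have "(\<Sum>j\<in>(UNIV::'m set). \<gamma>^2 * G k * N - X) \<le> (\<Sum>j\<in>UNIV. c j * T j)"
      by (rule sum_mono) (use Tb in blast)
    then show ?thesis by (simp add: m_def)
  qed
  have s2: "(\<Sum>j\<in>UNIV. c j * T j) \<le> m * (G k * N + X)"
  proof -
    have "(\<Sum>j\<in>UNIV. c j * T j) \<le> (\<Sum>j\<in>(UNIV::'m set). G k * N + X)"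
      by (rule sum_mono) (use Tb in blast)
    then show ?thesis by (simp add: m_def)
  qed
  have an: "0 \<le> \<alpha> / real n" using alpha by simp
  show "\<alpha> / real n * (\<gamma>^2 * gg (y k * net \<phi> a W (x k)) * (x k \<bullet> x k) - X)
           \<le> y k * net \<phi> a W' (x k) - y k * net \<phi> a W (x k)"
  proof -
    have "(1 / m) * (m * (\<gamma>^2 * G k * N - X)) \<le> (1 / m) * (\<Sum>j\<in>UNIV. c j * T j)"
      using s1 m by (intro mult_left_mono) auto
    then have "\<alpha> / real n * (\<gamma>^2 * G k * N - X) \<le> \<alpha> / real n * ((1 / m) * (\<Sum>j\<in>UNIV. c j * T j))"
      using m an by (intro mult_left_mono) auto
    then show ?thesis unfolding diff G_def N_def by (simp add: mult.assoc)
  qed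
  show "y k * net \<phi> a W' (x k) - y k * net \<phi> a W (x k)
           \<le> \<alpha> / real n * (gg (y k * net \<phi> a W (x k)) * (x k \<bullet> x k) + X)"
  proof -
    have "(1 / m) * (\<Sum>j\<in>UNIV. c j * T j) \<le> (1 / m) * (m * (G k * N + X))"
      using s2 m by (intro mult_left_mono) auto
    then have "\<alpha> / real n * ((1 / m) * (\<Sum>j\<in>UNIV. c j * T j)) \<le> \<alpha> / real n * (G k * N + X)"
      using m an by (intro mult_left_mono) auto
    then show ?thesis unfolding diff G_def N_def by (simp add: mult.assoc)
  qed
qed



lemma inv_step:
  fixes z z' N :: "nat \<Rightarrow> real" and P :: "nat \<Rightarrow> nat \<Rightarrow> real"
  assumes g: "0 < \<gamma>" "\<gamma> \<le> 1"
    and CR: "CR = 10 * R^2 / \<gamma>^2 + 10"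
    and n: "n \<ge> 1"
    and near: "\<forall>i<n. \<forall>k<n. i \<noteq> k \<longrightarrow> 5 / \<gamma>^2 * CR * real n * \<bar>P i k\<bar> \<le> N k"
    and RN: "\<forall>i<n. \<forall>j<n. N j \<le> R^2 * N i"
    and N0: "\<forall>i<n. 0 \<le> N i"
    and alpha: "0 \<le> \<alpha>" "\<forall>k<n. \<alpha> * N k \<le> 1/4"
    and inv1: "\<forall>i<n. - ln 2 \<le> z i"
    and inv2: "\<forall>i<n. \<forall>j<n. 1 + exp (z j) \<le> CR * (1 + exp (z i))"
    and step: "\<forall>k<n. \<alpha> / real n * (\<gamma>^2 * gg (z k) * N k - (\<Sum>i\<in>{..<n}-{k}. gg (z i) * \<bar>P i k\<bar>))
                 \<le> z' k - z k \<and>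
               z' k - z k \<le> \<alpha> / real n * (gg (z k) * N k + (\<Sum>i\<in>{..<n}-{k}. gg (z i) * \<bar>P i k\<bar>))"
  shows "(\<forall>i<n. - ln 2 \<le> z' i) \<and> (\<forall>i<n. \<forall>j<n. 1 + exp (z' j) \<le> CR * (1 + exp (z' i)))"
proof -
  define A where "A = \<alpha> / real n"
  have A0: "0 \<le> A" using alpha unfolding A_def by simp
  have nr: "real n > 0" using n by simp
  have CRpos: "CR > 0" unfolding CR by (simp add: add_nonneg_pos)
  have CR9: "9 * R^2 \<le> CR * \<gamma>^2" unfolding CR using g by (simp add: field_simps)
  define q where "q i = 1 + exp (z i)" for i
  have qpos: "q i > 0" for i unfolding q_def by (simp add: add_pos_pos)
  have ggq: "gg (z i) = 1 / q i" for i unfolding gg_def q_def by simp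
  have h1: "gg (z i) \<le> CR * gg (z k)" if "i < n" "k < n" for i k
  proof -
    have "q k \<le> CR * q i" using inv2 that unfolding q_def by blast
    then show ?thesis unfolding ggq using qpos[of i] qpos[of k] CRpos
      by (simp add: field_simps)
  qed
  define X where "X k = (\<Sum>i\<in>{..<n}-{k}. gg (z i) * \<bar>P i k\<bar>)" for k
  have h2: "X k \<le> \<gamma>^2 / 5 * gg (z k) * N k" if k: "k < n" for k
  proof -
    have trm: "gg (z i) * \<bar>P i k\<bar> \<le> \<gamma>^2 / (5 * real n) * gg (z k) * N k" if i: "i \<in> {..<n}-{k}" for i
    proof -
      have "5 / \<gamma>^2 * CR * real n * \<bar>P i k\<bar> \<le> N k" using near i k by auto
      moreover have "0 < 5 / \<gamma>^2 * CR * real n" using g CRpos nr by simp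
      ultimately have "\<bar>P i k\<bar> \<le> N k / (5 / \<gamma>^2 * CR * real n)"
        using pos_le_divide_eq[of "5 / \<gamma>^2 * CR * real n" "\<bar>P i k\<bar>" "N k"] by (simp only: mult.commute)
      also have "N k / (5 / \<gamma>^2 * CR * real n) = \<gamma>^2 / (5 * CR * real n) * N k"
        by simp
      finally have Pb: "\<bar>P i k\<bar> \<le> \<gamma>^2 / (5 * CR * real n) * N k" .
      have "gg (z i) * \<bar>P i k\<bar> \<le> (CR * gg (z k)) * (\<gamma>^2 / (5 * CR * real n) * N k)"
        using h1[of i k] i k Pb gg_pos[of "z i"] by (intro mult_mono) auto
      also have "\<dots> = \<gamma>^2 / (5 * real n) * gg (z k) * N k" using CRpos by (simp add: field_simps)
      finally show ?thesis .
    qed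
    have "X k \<le> (\<Sum>i\<in>{..<n}-{k}. \<gamma>^2 / (5 * real n) * gg (z k) * N k)"
      unfolding X_def by (rule sum_mono) (rule trm)
    also have "\<dots> = real (card ({..<n}-{k})) * (\<gamma>^2 / (5 * real n) * gg (z k) * N k)" by simp
    also have "\<dots> \<le> real n * (\<gamma>^2 / (5 * real n) * gg (z k) * N k)"
    proof (rule mult_right_mono)
      show "real (card ({..<n}-{k})) \<le> real n" using k by simp
      show "0 \<le> \<gamma>^2 / (5 * real n) * gg (z k) * N k" using N0 k gg_pos[of "z k"] by simp
    qed
    also have "\<dots> = \<gamma>^2 / 5 * gg (z k) * N k" using nr by (simp add: field_simps)
    finally show ?thesis .
  qed
  have lo: "A * (4/5 * \<gamma>^2 * gg (z k) * N k) \<le> z' k - z k" if k: "k < n" for k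
  proof -
    have "A * (4/5 * \<gamma>^2 * gg (z k) * N k) \<le> A * (\<gamma>^2 * gg (z k) * N k - X k)"
      using h2[OF k] A0 by (intro mult_left_mono) (auto simp: algebra_simps)
    then show ?thesis using step k unfolding A_def X_def by fastforce
  qed
  have up: "z' k - z k \<le> A * (6/5 * gg (z k) * N k)" if k: "k < n" for k
  proof -
    have "\<gamma>^2 / 5 * gg (z k) * N k \<le> 1 / 5 * gg (z k) * N k"
      using g N0 k gg_pos[of "z k"] by (intro mult_right_mono) (auto simp: power_le_one)
    then have "gg (z k) * N k + X k \<le> 6/5 * gg (z k) * N k" using h2[OF k] by linarith
    then have "A * (gg (z k) * N k + X k) \<le> A * (6/5 * gg (z k) * N k)"
      using A0 by (intro mult_left_mono) auto
    then show ?thesis using step k unfolding A_def X_def by fastforce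
  qed
  have D0: "0 \<le> z' k - z k" if "k < n" for k
  proof -
    have "0 \<le> A * (4/5 * \<gamma>^2 * gg (z k) * N k)"
      using A0 N0 that gg_pos[of "z k"] by (intro mult_nonneg_nonneg) auto
    then show ?thesis using lo[OF that] by linarith
  qed
  have qD: "q k * (z' k - z k) \<le> 6/5 * A * N k" if k: "k < n" for k
  proof -
    have "q k * (z' k - z k) \<le> q k * (A * (6/5 * gg (z k) * N k))"
      using up[OF k] qpos[of k] by (intro mult_left_mono) auto
    also have "\<dots> = 6/5 * A * N k" unfolding ggq using qpos[of k] by (simp add: field_simps)
    finally show ?thesis .
  qed
  have Dhalf: "z' k - z k \<le> 1/2" if k: "k < n" for k
  proof -
    have "A * (6/5 * gg (z k) * N k) \<le> 6/5 * \<alpha> * N k"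
    proof -
      have "gg (z k) * N k \<le> 1 * N k" using gg_le1[of "z k"] N0 k by (intro mult_right_mono) auto
      moreover have "A \<le> \<alpha>"
      proof -
        have "\<alpha> * 1 \<le> \<alpha> * real n" using n alpha by (intro mult_left_mono) auto
        then show ?thesis unfolding A_def using nr by (simp add: divide_le_eq)
      qed
      ultimately have "A * (gg (z k) * N k) \<le> \<alpha> * (1 * N k)"
        using A0 N0 k gg_pos[of "z k"] less_imp_le[OF gg_le1[of "z k"]] by (intro mult_mono) auto
      then show ?thesis by (simp add: algebra_simps)
    qed
    moreover have "\<alpha> * N k \<le> 1/4" using alpha(2) k by blast
    ultimately show ?thesis using up[OF k] by linarith
  qed
  have eb: "exp (z i) / q i \<ge> 1/3" if "i < n" for i
  proof -
    have "exp (- ln 2) \<le> exp (z i)" using inv1 that by simp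
    then have "1/2 \<le> exp (z i)" by (simp add: exp_minus)
    moreover have "0 < 1 + exp (z i)" by (simp add: add_pos_pos)
    ultimately show ?thesis unfolding q_def by (simp add: le_divide_eq)
  qed
  show ?thesis
  proof (intro conjI allI impI)
    fix i assume "i < n" then show "- ln 2 \<le> z' i" using inv1 D0 by fastforce
  next
    fix i j assume i: "i < n" and j: "j < n"
    define Di where "Di = z' i - z i"
    define Dj where "Dj = z' j - z j"
    have qj: "1 + exp (z' j) \<le> q j + 2 * (q j * Dj)"
    proof -
      have "exp (z' j) = exp (z j) * exp Dj" unfolding Dj_def by (simp flip: exp_add)
      also have "\<dots> \<le> exp (z j) * (1 + 2 * Dj)"
        using real_exp_bound_lemma[of Dj] D0[OF j] Dhalf[OF j] unfolding Dj_def by simp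
      finally have "1 + exp (z' j) \<le> q j + 2 * (exp (z j) * Dj)" unfolding q_def by (simp add: algebra_simps)
      also have "exp (z j) * Dj \<le> q j * Dj" using D0[OF j] unfolding Dj_def q_def by (intro mult_right_mono) auto
      finally show ?thesis by simp
    qed
    have qi: "q i + exp (z i) * Di \<le> 1 + exp (z' i)"
    proof -
      have "exp (z' i) = exp (z i) * exp Di" unfolding Di_def by (simp flip: exp_add)
      moreover have "exp (z i) * (1 + Di) \<le> exp (z i) * exp Di" by (intro mult_left_mono) auto
      ultimately show ?thesis unfolding q_def by (simp add: algebra_simps)
    qed
    have key: "2 * (q j * Dj) \<le> CR * (exp (z i) * Di)"
    proof -
      have "2 * (q j * Dj) \<le> 2 * (6/5 * A * N j)" using qD[OF j] unfolding Dj_def by simp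
      also have "\<dots> = 12/5 * A * N j" by simp
      also have "\<dots> \<le> 12/5 * A * (R^2 * N i)" using RN i j A0 by (intro mult_left_mono) auto
      also have "\<dots> = A * N i * (12/5 * R^2)" by (simp add: algebra_simps)
      also have "\<dots> \<le> A * N i * (4/15 * (CR * \<gamma>^2))"
        using CR9 A0 N0 i by (intro mult_left_mono) auto
      also have "\<dots> = CR * (1/3 * (A * (4/5 * \<gamma>^2 * N i)))" by (simp add: algebra_simps)
      also have "\<dots> \<le> CR * ((exp (z i) / q i) * (A * (4/5 * \<gamma>^2 * N i)))"
        using eb[OF i] CRpos A0 N0 i by (intro mult_left_mono mult_right_mono) auto
      also have "(exp (z i) / q i) * (A * (4/5 * \<gamma>^2 * N i)) = exp (z i) * (A * (4/5 * \<gamma>^2 * gg (z i) * N i))"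
        unfolding ggq using qpos[of i] by (simp add: field_simps)
      also have "CR * \<dots> \<le> CR * (exp (z i) * Di)"
        using lo[OF i] CRpos unfolding Di_def by (intro mult_left_mono) auto
      finally show ?thesis .
    qed
    have "q j \<le> CR * q i" using inv2 i j unfolding q_def by blast
    then have "1 + exp (z' j) \<le> CR * (q i + exp (z i) * Di)"
      using qj key by (simp add: algebra_simps)
    also have "\<dots> \<le> CR * (1 + exp (z' i))" using qi CRpos by (intro mult_left_mono) auto
    finally show "1 + exp (z' j) \<le> CR * (1 + exp (z' i))" .
  qed
qed



lemma nn_1d:
  assumes w: "0 < \<omega>"
  shows "(\<integral>\<^sup>+ z. ennreal (exp (z^2 / (4 * \<omega>^2))) \<partial>(density lborel (normal_density 0 \<omega>))) = ennreal (sqrt 2)"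
proof -
  have pw: "ennreal (normal_density 0 \<omega> z) * ennreal (exp (z^2 / (4 * \<omega>^2)))
      = ennreal (sqrt 2) * ennreal (normal_density 0 (sqrt 2 * \<omega>) z)" for z
  proof -
    have "normal_density 0 \<omega> z * exp (z^2 / (4 * \<omega>^2)) = sqrt 2 * normal_density 0 (sqrt 2 * \<omega>) z"
    proof -
      have e: "exp (-(z - 0)\<^sup>2 / (2 * \<omega>\<^sup>2)) * exp (z^2 / (4 * \<omega>^2)) = exp (-(z - 0)\<^sup>2 / (2 * (sqrt 2 * \<omega>)\<^sup>2))"
      proof -
        have "-(z - 0)\<^sup>2 / (2 * \<omega>\<^sup>2) + z^2 / (4 * \<omega>^2) = -(z - 0)\<^sup>2 / (2 * (sqrt 2 * \<omega>)\<^sup>2)"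
        proof -
          have "(sqrt 2 * \<omega>)\<^sup>2 = 2 * \<omega>^2" by (simp add: power_mult_distrib)
          then show ?thesis using w by (simp add: divide_simps)
        qed
        then show ?thesis by (metis exp_add)
      qed
      have s: "1 / sqrt (2 * (pi * \<omega>\<^sup>2)) = sqrt 2 * (1 / sqrt (2 * (pi * (sqrt 2 * \<omega>)\<^sup>2)))"
      proof -
        have "sqrt (2 * (pi * (sqrt 2 * \<omega>)\<^sup>2)) = sqrt 2 * sqrt (2 * (pi * \<omega>\<^sup>2))"
          by (simp add: power_mult_distrib real_sqrt_mult[symmetric] ac_simps)
        moreover have "sqrt 2 > 0" by simp
        ultimately show ?thesis by simp
      qed
      show ?thesis unfolding normal_density_def mult.assoc e s by (rule refl)
    qed
    then show ?thesis by (simp add: ennreal_mult'[symmetric])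
  qed
  have "(\<integral>\<^sup>+ z. ennreal (exp (z^2 / (4 * \<omega>^2))) \<partial>(density lborel (normal_density 0 \<omega>)))
      = (\<integral>\<^sup>+ z. ennreal (normal_density 0 \<omega> z) * ennreal (exp (z^2 / (4 * \<omega>^2))) \<partial>lborel)"
    by (subst nn_integral_density) auto
  also have "\<dots> = (\<integral>\<^sup>+ z. ennreal (sqrt 2) * ennreal (normal_density 0 (sqrt 2 * \<omega>) z) \<partial>lborel)"
    using pw by simp
  also have "\<dots> = ennreal (sqrt 2) * (\<integral>\<^sup>+ z. ennreal (normal_density 0 (sqrt 2 * \<omega>) z) \<partial>lborel)"
    by (subst nn_integral_cmult) auto
  also have "(\<integral>\<^sup>+ z. ennreal (normal_density 0 (sqrt 2 * \<omega>) z) \<partial>lborel) = 1"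
  proof -
    have "AE x in lborel. 0 \<le> normal_density 0 (sqrt 2 * \<omega>) x" by simp
    moreover have "0 < sqrt 2 * \<omega>" using w by simp
    moreover note nn_integral_eq_integral[OF integrable_normal_density[where \<mu>=0 and \<sigma>="sqrt 2 * \<omega>"]]
    moreover note integral_normal_density[where \<mu>=0 and \<sigma>="sqrt 2 * \<omega>"]
    ultimately show ?thesis by simp
  qed
  finally show ?thesis by simp
qed

lemma norm_chi_sq:
  fixes f :: "'m::finite \<times> 'd::finite \<Rightarrow> real"
  shows "(norm ((\<chi> j k. f (j, k)) :: real^'d^'m))^2 = (\<Sum>p\<in>UNIV. (f p)^2)"
proof -
  have "(norm ((\<chi> j k. f (j, k)) :: real^'d^'m))^2 = (\<Sum>j\<in>UNIV. (norm ((\<chi> k. f (j, k)) :: real^'d))^2)"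
    unfolding norm_vec_def L2_set_def by (simp add: sum_nonneg)
  also have "\<dots> = (\<Sum>j\<in>UNIV. \<Sum>k\<in>UNIV. (f (j, k))^2)"
    unfolding norm_vec_def L2_set_def by (simp add: sum_nonneg)
  also have "\<dots> = (\<Sum>p\<in>UNIV \<times> UNIV. (f p)^2)"
    by (simp add: sum.cartesian_product)
  finally show ?thesis by (simp add: UNIV_Times_UNIV)
qed

lemma init_tail:
  fixes \<omega> b :: real
  assumes w: "0 < \<omega>" and b0: "0 \<le> b"
  shows "{W. norm W \<le> b} \<in> sets (init_measure \<omega> :: (real^'d::finite^'m::finite) measure)"
    and "1 - sqrt 2 ^ (CARD('m) * CARD('d)) * exp (- (b^2 / (4 * \<omega>^2)))
           \<le> measure (init_measure \<omega> :: (real^'d::finite^'m::finite) measure) {W. norm W \<le> b}"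
proof -
  define N1 where "N1 = density lborel (normal_density 0 \<omega>)"
  define Pm where "Pm = PiM (UNIV :: ('m \<times> 'd) set) (\<lambda>_. N1)"
  define chi :: "('m \<times> 'd \<Rightarrow> real) \<Rightarrow> real^'d^'m" where "chi = (\<lambda>f. \<chi> j k. f (j, k))"
  have mu: "(init_measure \<omega> :: (real^'d^'m) measure) = distr Pm borel chi"
    unfolding init_measure_def Pm_def N1_def chi_def by simp
  have pN1: "prob_space N1" unfolding N1_def by (rule prob_space_normal_density) (rule w)
  have pP: "prob_space Pm" unfolding Pm_def using pN1 by (intro prob_space_PiM) auto
  interpret P: prob_space Pm by (rule pP)
  have comp[measurable]: "(\<lambda>x. x p) \<in> borel_measurable Pm" for p
  proof -
    have "measurable Pm N1 = measurable Pm borel"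
      by (rule measurable_cong_sets) (auto simp: N1_def)
    then show ?thesis using measurable_component_singleton[of p UNIV "\<lambda>_. N1"] unfolding Pm_def by simp
  qed
  have meas: "chi \<in> borel_measurable Pm"
  proof (subst borel_measurable_euclidean_space, intro ballI)
    fix c :: "real^'d^'m"
    have "(\<lambda>f. chi f \<bullet> c) = (\<lambda>f. \<Sum>j\<in>UNIV. \<Sum>k\<in>UNIV. f (j, k) * (c $ j $ k))"
      unfolding chi_def inner_vec_def by simp
    moreover have "(\<lambda>f. \<Sum>j\<in>UNIV. \<Sum>k\<in>UNIV. f (j, k) * (c $ j $ k)) \<in> borel_measurable Pm"
      by measurable
    ultimately show "(\<lambda>f. chi f \<bullet> c) \<in> borel_measurable Pm" by simp
  qed
  have closedE: "closed {W :: real^'d^'m. norm W \<le> b}"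
    using closed_cball[of "0 :: real^'d^'m" b] by (simp add: cball_def)
  then show "{W. norm W \<le> b} \<in> sets (init_measure \<omega> :: (real^'d::finite^'m::finite) measure)"
    unfolding mu by simp
  have Eb: "{W :: real^'d^'m. norm W \<le> b} \<in> sets borel" using closedE by simp
  interpret D: prob_space "distr Pm borel chi" by (rule P.prob_space_distr[OF meas])
  define S where "S f = (\<Sum>p\<in>UNIV. (f p)^2)" for f :: "'m \<times> 'd \<Rightarrow> real"
  have Smeas: "S \<in> borel_measurable Pm" unfolding S_def by measurable
  have sp: "space Pm = UNIV" unfolding Pm_def N1_def by (simp add: space_PiM PiE_UNIV_domain)
  define s where "s = 1 / (4 * \<omega>^2)"
  have s0: "s > 0" unfolding s_def using w by simp
  have ch: "emeasure Pm {x \<in> space Pm. b^2 \<le> S x}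
      \<le> ennreal (exp (- s * b^2)) * (\<integral>\<^sup>+ x. ennreal (exp (s * S x)) * indicator (space Pm) x \<partial>Pm)"
    by (rule Chernoff_ineq_nn_integral_ge[OF s0]) (use Smeas in auto)
  have int: "(\<integral>\<^sup>+ x. ennreal (exp (s * S x)) * indicator (space Pm) x \<partial>Pm) = ennreal (sqrt 2 ^ (CARD('m) * CARD('d)))"
  proof -
    have "(\<integral>\<^sup>+ x. ennreal (exp (s * S x)) * indicator (space Pm) x \<partial>Pm)
        = (\<integral>\<^sup>+ x. (\<Prod>p\<in>UNIV. ennreal (exp ((x p)^2 / (4 * \<omega>^2)))) \<partial>Pm)"
    proof (rule nn_integral_cong)
      fix x assume "x \<in> space Pm"
      have "exp (s * S x) = (\<Prod>p\<in>UNIV. exp ((x p)^2 / (4 * \<omega>^2)))"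
        unfolding S_def s_def sum_distrib_left exp_sum[OF finite] by simp
      then show "ennreal (exp (s * S x)) * indicator (space Pm) x = (\<Prod>p\<in>UNIV. ennreal (exp ((x p)^2 / (4 * \<omega>^2))))"
        using sp by (simp add: prod_ennreal)
    qed
    also have "\<dots> = (\<Prod>p\<in>(UNIV :: ('m \<times> 'd) set). (\<integral>\<^sup>+ z. ennreal (exp (z^2 / (4 * \<omega>^2))) \<partial>N1))"
    proof -
      interpret PS: product_sigma_finite "\<lambda>_. N1"
        unfolding product_sigma_finite_def using pN1 by (simp add: prob_space_imp_sigma_finite)
      show ?thesis unfolding Pm_def by (rule PS.product_nn_integral_prod) (auto simp: N1_def)
    qed
    also have "\<dots> = (\<Prod>p\<in>(UNIV :: ('m \<times> 'd) set). ennreal (sqrt 2))"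
      unfolding N1_def nn_1d[OF w] ..
    also have "\<dots> = ennreal (sqrt 2 ^ (CARD('m) * CARD('d)))"
    proof -
      have "card (UNIV :: ('m \<times> 'd) set) = CARD('m) * CARD('d)"
        by (metis UNIV_Times_UNIV card_cartesian_product)
      then show ?thesis by (simp add: prod_ennreal ennreal_power)
    qed
    finally show ?thesis .
  qed
  define B where "B = sqrt 2 ^ (CARD('m) * CARD('d)) * exp (- (b^2 / (4 * \<omega>^2)))"
  have B0: "0 \<le> B" unfolding B_def by simp
  have em: "emeasure Pm {x \<in> space Pm. b^2 \<le> S x} \<le> ennreal B"
  proof -
    have "ennreal (exp (- s * b^2)) * ennreal (sqrt 2 ^ (CARD('m) * CARD('d))) = ennreal B"
      unfolding B_def s_def by (simp add: ennreal_mult'[symmetric] mult.commute)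
    then show ?thesis using ch int by simp
  qed
  have pre: "chi -` (UNIV - {W. norm W \<le> b}) \<inter> space Pm \<subseteq> {x \<in> space Pm. b^2 \<le> S x}"
  proof
    fix f assume f: "f \<in> chi -` (UNIV - {W. norm W \<le> b}) \<inter> space Pm"
    then have "b < norm (chi f)" by auto
    then have "b^2 \<le> (norm (chi f))^2"
      using b0 by (intro power_mono) auto
    then show "f \<in> {x \<in> space Pm. b^2 \<le> S x}"
      using f unfolding chi_def S_def norm_chi_sq by simp
  qed
  have Smeas2: "{x \<in> space Pm. b^2 \<le> S x} \<in> sets Pm" using Smeas by measurable
  have "measure (distr Pm borel chi) (UNIV - {W. norm W \<le> b}) = measure Pm (chi -` (UNIV - {W. norm W \<le> b}) \<inter> space Pm)"
    using Eb meas by (intro measure_distr) auto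
  also have "\<dots> \<le> measure Pm {x \<in> space Pm. b^2 \<le> S x}"
    using pre Smeas2 by (intro P.finite_measure_mono) auto
  also have "\<dots> \<le> B"
    using em B0 by (simp add: P.emeasure_eq_measure)
  finally have c: "measure (distr Pm borel chi) (UNIV - {W. norm W \<le> b}) \<le> B" .
  have "measure (distr Pm borel chi) (space (distr Pm borel chi) - {W. norm W \<le> b}) = 1 - measure (distr Pm borel chi) {W. norm W \<le> b}"
    using Eb by (intro D.prob_compl) simp
  then show "1 - sqrt 2 ^ (CARD('m) * CARD('d)) * exp (- (b^2 / (4 * \<omega>^2)))
           \<le> measure (init_measure \<omega> :: (real^'d::finite^'m::finite) measure) {W. norm W \<le> b}"
    using c unfolding mu B_def by simp
qed



lemma ln2_ge: "1/2 \<le> ln (2::real)"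
proof -
  have "exp (1/2::real) \<le> 1 + 2 * (1/2)" by (rule real_exp_bound_lemma) auto
  then have "exp (1/2::real) \<le> 2" by simp
  then have "ln (exp (1/2::real)) \<le> ln 2" by (subst ln_le_cancel_iff) auto
  then show ?thesis by simp
qed

lemma det_main:
  fixes W0 :: "real^'d::finite^'m::finite" and x :: "nat \<Rightarrow> real^'d"
  assumes act: "leaky_smooth \<phi> \<gamma> H"
    and a2: "\<forall>j. (a j)^2 = 1 / real CARD('m)"
    and y: "\<forall>i<n. y i = 1 \<or> y i = -1"
    and n: "n \<ge> 1"
    and CR: "CR = 10 * R^2 / \<gamma>^2 + 10"
    and near: "\<forall>i<n. \<forall>k<n. i \<noteq> k \<longrightarrow> 5 / \<gamma>^2 * CR * real n * \<bar>x i \<bullet> x k\<bar> \<le> x k \<bullet> x k"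
    and RN: "\<forall>i<n. \<forall>j<n. x j \<bullet> x j \<le> R^2 * (x i \<bullet> x i)"
    and alpha: "0 \<le> \<alpha>" "\<forall>k<n. \<alpha> * (x k \<bullet> x k) \<le> 1/4"
    and init: "\<forall>k<n. \<bar>net \<phi> a W0 (x k)\<bar> \<le> 1/2"
  shows "\<forall>t. \<forall>i<n. \<forall>j<n.
              deriv logistic (y i * net \<phi> a (gd_iter (emp_risk \<phi> a n x y) \<alpha> W0 t) (x i))
              / deriv logistic (y j * net \<phi> a (gd_iter (emp_risk \<phi> a n x y) \<alpha> W0 t) (x j))
              \<le> CR"
proof -
  define Wt where "Wt t = gd_iter (emp_risk \<phi> a n x y) \<alpha> W0 t" for t
  define z where "z t i = y i * net \<phi> a (Wt t) (x i)" for t i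
  have g: "0 < \<gamma>" "\<gamma> \<le> 1" using act unfolding leaky_smooth_def by auto
  have CR10: "10 \<le> CR" unfolding CR by simp
  have inv: "(\<forall>i<n. - ln 2 \<le> z t i) \<and> (\<forall>i<n. \<forall>j<n. 1 + exp (z t j) \<le> CR * (1 + exp (z t i)))" for t
  proof (induction t)
    case 0
    have zb: "\<bar>z 0 i\<bar> \<le> 1/2" if "i < n" for i
    proof -
      have "\<bar>y i\<bar> = 1" using y that by auto
      then show ?thesis using init that unfolding z_def Wt_def by (simp add: abs_mult)
    qed
    show ?case
    proof (intro conjI allI impI)
      fix i assume "i < n" then show "- ln 2 \<le> z 0 i" using zb[of i] ln2_ge by linarith
    next
      fix i j assume i: "i < n" and j: "j < n"
      have "exp (z 0 j) \<le> exp (1/2)" using zb[OF j] by simp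
      also have "exp (1/2::real) \<le> 1 + 2 * (1/2)" by (rule real_exp_bound_lemma) auto
      finally have "1 + exp (z 0 j) \<le> CR * 1" using CR10 by simp
      also have "CR * 1 \<le> CR * (1 + exp (z 0 i))" using CR10 by (intro mult_left_mono) auto
      finally show "1 + exp (z 0 j) \<le> CR * (1 + exp (z 0 i))" .
    qed
  next
    case (Suc t)
    have step: "\<forall>k<n. \<alpha> / real n * (\<gamma>^2 * gg (z t k) * (x k \<bullet> x k) - (\<Sum>i\<in>{..<n}-{k}. gg (z t i) * \<bar>x i \<bullet> x k\<bar>))
                 \<le> z (Suc t) k - z t k \<and>
               z (Suc t) k - z t k \<le> \<alpha> / real n * (gg (z t k) * (x k \<bullet> x k) + (\<Sum>i\<in>{..<n}-{k}. gg (z t i) * \<bar>x i \<bullet> x k\<bar>))"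
    proof (intro allI impI)
      fix k assume k: "k < n"
      have W': "Wt (Suc t) = Wt t - \<alpha> *\<^sub>R gradient (emp_risk \<phi> a n x y) (Wt t)"
        unfolding Wt_def by simp
      note ms = margin_step[OF act a2 y k alpha(1) W' refl]
      show "\<alpha> / real n * (\<gamma>^2 * gg (z t k) * (x k \<bullet> x k) - (\<Sum>i\<in>{..<n}-{k}. gg (z t i) * \<bar>x i \<bullet> x k\<bar>))
                 \<le> z (Suc t) k - z t k \<and>
               z (Suc t) k - z t k \<le> \<alpha> / real n * (gg (z t k) * (x k \<bullet> x k) + (\<Sum>i\<in>{..<n}-{k}. gg (z t i) * \<bar>x i \<bullet> x k\<bar>))"
        using ms unfolding z_def by simp
    qed
    show ?case
      by (rule inv_step[where N="\<lambda>k. x k \<bullet> x k" and P="\<lambda>i k. x i \<bullet> x k", OF g CR n near RN _ alpha _ _ step])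
         (use Suc in auto)
  qed
  show ?thesis
  proof (intro allI impI)
    fix t i j assume i: "i < n" and j: "j < n"
    have "deriv logistic (z t i) / deriv logistic (z t j) = (1 + exp (z t j)) / (1 + exp (z t i))"
      unfolding deriv_logistic gg_def by (simp add: add_pos_pos)
    also have "\<dots> \<le> CR"
      using inv[of t] i j by (simp add: divide_le_eq add_pos_pos)
    finally show "deriv logistic (y i * net \<phi> a (gd_iter (emp_risk \<phi> a n x y) \<alpha> W0 t) (x i))
              / deriv logistic (y j * net \<phi> a (gd_iter (emp_risk \<phi> a n x y) \<alpha> W0 t) (x j)) \<le> CR"
      unfolding z_def Wt_def .
  qed
qed



lemma net_bound:
  fixes W :: "real^'d::finite^'m::finite" and v :: "real^'d"
  assumes act: "leaky_smooth \<phi> \<gamma> H"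
    and aa: "\<forall>j. \<bar>a j\<bar> = 1 / sqrt (real CARD('m))"
  shows "\<bar>net \<phi> a W v\<bar> \<le> norm W * norm v"
proof -
  define M where "M = real CARD('m)"
  have M: "M > 0" unfolding M_def by simp
  have phib: "\<bar>\<phi> u\<bar> \<le> \<bar>u\<bar>" for u
  proof -
    obtain c where c: "\<gamma> \<le> c" "c \<le> 1" "\<phi> u - \<phi> 0 = c * (u - 0)" using phi_mvt[OF act] by blast
    have "\<phi> 0 = 0" "0 < \<gamma>" using act unfolding leaky_smooth_def by auto
    then have "\<bar>\<phi> u\<bar> = c * \<bar>u\<bar>" using c by (simp add: abs_mult)
    also have "\<dots> \<le> 1 * \<bar>u\<bar>" using c by (intro mult_right_mono) auto
    finally show ?thesis by simp
  qed
  have "\<bar>net \<phi> a W v\<bar> \<le> (\<Sum>j\<in>UNIV. \<bar>a j * \<phi> (W$j \<bullet> v)\<bar>)"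
    unfolding net_def by (rule sum_abs)
  also have "\<dots> \<le> (\<Sum>j\<in>UNIV. 1 / sqrt M * (\<bar>norm (W$j)\<bar> * \<bar>1\<bar> * norm v))"
  proof (rule sum_mono)
    fix j
    have "\<bar>\<phi> (W$j \<bullet> v)\<bar> \<le> norm (W$j) * norm v"
      using phib[of "W$j \<bullet> v"] Cauchy_Schwarz_ineq2[of "W$j" v] by linarith
    then show "\<bar>a j * \<phi> (W$j \<bullet> v)\<bar> \<le> 1 / sqrt M * (\<bar>norm (W$j)\<bar> * \<bar>1\<bar> * norm v)"
      unfolding abs_mult using aa M unfolding M_def by (simp add: divide_right_mono)
  qed
  also have "\<dots> = 1 / sqrt M * norm v * (\<Sum>j\<in>UNIV. \<bar>norm (W$j)\<bar> * \<bar>1::real\<bar>)"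
    by (simp add: sum_distrib_left algebra_simps)
  also have "\<dots> \<le> 1 / sqrt M * norm v * (L2_set (\<lambda>j. norm (W$j)) UNIV * L2_set (\<lambda>_. 1::real) (UNIV::'m set))"
    using M L2_set_mult_ineq[of "\<lambda>j. norm (W$j)" "\<lambda>_. 1::real" "UNIV::'m set"] by (intro mult_left_mono) auto
  also have "\<dots> = norm W * norm v"
    unfolding norm_vec_def[symmetric] L2_set_constant using M unfolding M_def by simp
  finally show ?thesis .
qed



theorem mainTheorem7:
  fixes \<phi> :: "real \<Rightarrow> real" and \<gamma> H :: real
    and a :: "'m::finite \<Rightarrow> real"
    and n :: nat and x :: "nat \<Rightarrow> real^'d::finite" and y :: "nat \<Rightarrow> real"
    and \<alpha> \<omega> \<delta> R Rmax Rmin CR :: real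
  assumes act: "leaky_smooth \<phi> \<gamma> H"
    and a_def: "\<forall>j. a j = 1 / sqrt (real CARD('m)) \<or> a j = - 1 / sqrt (real CARD('m))"
    and n_pos: "n \<ge> 1"
    and y_def: "\<forall>i<n. y i = 1 \<or> y i = -1"
    and R_def: "R = Max {norm (x i) / norm (x j) | i j. i < n \<and> j < n}"
    and Rmax_def: "Rmax = Max {norm (x i) | i. i < n}"
    and Rmin_def: "Rmin = Min {norm (x i) | i. i < n}"
    and CR_def: "CR = 10 * R^2 / \<gamma>^2 + 10"
    and near_orth: "\<forall>i<n. \<forall>k<n. k \<noteq> i \<longrightarrow>
         norm (x i)^2 \<ge> 5 / \<gamma>^2 * CR * real n * \<bar>x i \<bullet> x k\<bar>"
    and delta: "0 < \<delta>" "\<delta> < 1"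
    and alpha_pos: "0 < \<alpha>"
    and A1: "\<alpha> \<le> \<gamma>^2 / (5 * real n * Rmax^2 * R^2 * CR * max 1 H)"
    and omega_pos: "0 < \<omega>"
    and A2: "\<omega> \<le> \<alpha> * \<gamma>^2 * Rmin /
         (72 * R * CR * real n * sqrt (real CARD('m) * real CARD('d) * ln (4 * real CARD('m) / \<delta>)))"
  shows "\<exists>E \<in> sets (init_measure \<omega> :: (real^'d^'m) measure).
           measure (init_measure \<omega>) E \<ge> 1 - \<delta> \<and>
           (\<forall>W0\<in>E. \<forall>t. \<forall>i<n. \<forall>j<n.
              deriv logistic (y i * net \<phi> a (gd_iter (emp_risk \<phi> a n x y) \<alpha> W0 t) (x i))
              / deriv logistic (y j * net \<phi> a (gd_iter (emp_risk \<phi> a n x y) \<alpha> W0 t) (x j))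
              \<le> CR)"
proof -
  define M where "M = real CARD('m)"
  define Dd where "Dd = real CARD('d)"
  define L where "L = ln (4 * M / \<delta>)"
  define sq where "sq = sqrt (M * Dd * L)"
  define b where "b = 2 * \<omega> * sq"
  have M1: "1 \<le> M" unfolding M_def by simp
  have D1: "1 \<le> Dd" unfolding Dd_def by simp
  have g: "0 < \<gamma>" "\<gamma> \<le> 1" using act unfolding leaky_smooth_def by auto
  have nr: "1 \<le> real n" using n_pos by simp
  have L0: "0 < L"
  proof -
    have "1 < 4 * M / \<delta>" using M1 delta by (simp add: less_divide_eq)
    then show ?thesis unfolding L_def by simp
  qed
  have sq0: "0 \<le> sq" unfolding sq_def using M1 D1 L0 by simp
  have b0: "0 \<le> b" unfolding b_def using omega_pos sq0 by simp
  define NS where "NS = {norm (x i) | i. i < n}"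
  have NSfin: "finite NS" unfolding NS_def by simp
  have NSne: "NS \<noteq> {}" unfolding NS_def using n_pos by (auto intro: exI[of _ 0])
  have Rmin_le: "Rmin \<le> norm (x i)" if "i < n" for i
    unfolding Rmin_def using NSfin that by (intro Min_le) (auto simp: NS_def)
  have Rmax_ge: "norm (x i) \<le> Rmax" if "i < n" for i
    unfolding Rmax_def using NSfin that by (intro Max_ge) (auto simp: NS_def)
  have Rmin0: "0 \<le> Rmin"
  proof -
    have "Rmin \<in> NS" unfolding Rmin_def NS_def[symmetric] using NSfin NSne by (rule Min_in)
    then show ?thesis unfolding NS_def by auto
  qed
  define RS where "RS = {norm (x i) / norm (x j) | i j. i < n \<and> j < n}"
  have RSfin: "finite RS"
  proof -
    have "RS = (\<lambda>(i, j). norm (x i) / norm (x j)) ` ({..<n} \<times> {..<n})" unfolding RS_def by auto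
    then show ?thesis by simp
  qed
  have R_ge: "norm (x i) / norm (x j) \<le> R" if "i < n" "j < n" for i j
    unfolding R_def RS_def[symmetric] using RSfin that by (intro Max_ge) (auto simp: RS_def)
  define Den where "Den = 72 * R * CR * real n * sq"
  have A2': "\<omega> \<le> \<alpha> * \<gamma>^2 * Rmin / Den" using A2 unfolding Den_def sq_def L_def M_def Dd_def .
  have Rmin_pos: "0 < Rmin"
  proof (rule ccontr)
    assume "\<not> 0 < Rmin"
    then have "Rmin = 0" using Rmin0 by simp
    then show False using A2' omega_pos by simp
  qed
  have xpos: "0 < norm (x i)" if "i < n" for i using Rmin_le[OF that] Rmin_pos by linarith
  have R1: "1 \<le> R" using R_ge[of 0 0] xpos[of 0] n_pos by simp
  have CR10: "10 \<le> CR" unfolding CR_def by simp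
  have Rmax_pos: "Rmin \<le> Rmax" using Rmin_le[of 0] Rmax_ge[of 0] n_pos by simp
  have Den0: "0 \<le> Den" unfolding Den_def using R1 CR10 sq0 by simp
  have Denpos: "0 < Den"
  proof (rule ccontr)
    assume "\<not> 0 < Den" then have "Den = 0" using Den0 by simp
    then show False using A2' omega_pos by simp
  qed
  have wD: "\<omega> * Den \<le> \<alpha> * \<gamma>^2 * Rmin" using A2' Denpos by (simp add: le_divide_eq)
  define Den1 where "Den1 = 5 * real n * Rmax^2 * R^2 * CR * max 1 H"
  have Den1_ge: "50 * Rmax^2 \<le> Den1"
  proof -
    have R2: "1 \<le> R^2" using R1 by (simp add: one_le_power)
    have h1: "1 * 1 \<le> real n * R^2" using nr R2 by (intro mult_mono) auto
    have h2: "1 * 10 \<le> (real n * R^2) * CR" using h1 CR10 by (intro mult_mono) auto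
    have h3: "10 * 1 \<le> (real n * R^2 * CR) * max 1 H" using h2 by (intro mult_mono) auto
    have "(5 * Rmax^2) * 10 \<le> (5 * Rmax^2) * (real n * R^2 * CR * max 1 H)"
      using h3 by (intro mult_left_mono) auto
    then show ?thesis unfolding Den1_def by (simp add: algebra_simps)
  qed
  have Rmaxp: "0 < Rmax" using Rmax_pos Rmin_pos by simp
  have Den1pos: "0 < Den1" 
  proof -
    have "0 < 50 * Rmax^2" using Rmaxp by simp
    then show ?thesis using Den1_ge by linarith
  qed
  have aD: "\<alpha> * Den1 \<le> \<gamma>^2" using A1 Den1pos unfolding Den1_def[symmetric] by (simp add: le_divide_eq)
  have g21: "\<gamma>^2 \<le> 1" using g by (simp add: power_le_one)
  have aR: "\<alpha> * Rmax^2 \<le> 1/50"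
  proof -
    have "\<alpha> * (50 * Rmax^2) \<le> \<alpha> * Den1" using Den1_ge alpha_pos by (intro mult_left_mono) auto
    then show ?thesis using aD g21 by simp
  qed
  have bR: "b * Rmax \<le> 1/2"
  proof -
    have "720 * (\<omega> * sq) \<le> \<omega> * Den"
    proof -
      have "720 \<le> 72 * R * CR * real n"
      proof -
        have "72 * 1 * 10 * 1 \<le> 72 * R * CR * real n" using R1 CR10 nr by (intro mult_mono) auto
        then show ?thesis by simp
      qed
      then have "720 * (\<omega> * sq) \<le> (72 * R * CR * real n) * (\<omega> * sq)"
        using omega_pos sq0 by (intro mult_right_mono) auto
      then show ?thesis unfolding Den_def by (simp add: algebra_simps)
    qed
    also have "\<dots> \<le> \<alpha> * \<gamma>^2 * Rmin" by (rule wD)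
    also have "\<dots> \<le> \<alpha> * 1 * Rmax" using g21 Rmax_pos alpha_pos Rmin_pos by (intro mult_mono) auto
    finally have "720 * (\<omega> * sq) * Rmax \<le> \<alpha> * Rmax * Rmax" using Rmaxp by (simp add: mult_right_mono)
    then have "720 * (\<omega> * sq * Rmax) \<le> \<alpha> * Rmax^2" by (simp add: power2_eq_square algebra_simps)
    then have "720 * (\<omega> * sq * Rmax) \<le> 1/50" using aR by linarith
    then show ?thesis unfolding b_def by simp
  qed
  have Esets: "{W. norm W \<le> b} \<in> sets (init_measure \<omega> :: (real^'d^'m) measure)"
    by (rule init_tail(1)[OF omega_pos b0])
  have tail: "1 - sqrt 2 ^ (CARD('m) * CARD('d)) * exp (- (b^2 / (4 * \<omega>^2)))
      \<le> measure (init_measure \<omega> :: (real^'d^'m) measure) {W. norm W \<le> b}"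
    by (rule init_tail(2)[OF omega_pos b0])
  have small: "sqrt 2 ^ (CARD('m) * CARD('d)) * exp (- (b^2 / (4 * \<omega>^2))) \<le> \<delta>"
  proof -
    define k where "k = CARD('m) * CARD('d)"
    have kMD: "real k = M * Dd" unfolding k_def M_def Dd_def by simp
    have k1: "1 \<le> real k" 
    proof -
      have "1 * 1 \<le> M * Dd" using M1 D1 by (intro mult_mono) auto
      then show ?thesis unfolding kMD by simp
    qed
    have bb: "b^2 / (4 * \<omega>^2) = real k * L"
    proof -
      have "sq^2 = M * Dd * L" unfolding sq_def using M1 D1 L0 by simp
      then show ?thesis unfolding b_def kMD using omega_pos by (simp add: power_mult_distrib)
    qed
    have s2: "sqrt (2::real) \<le> 2"
    proof -
      have "sqrt (2::real) \<le> sqrt (2^2)" by (subst real_sqrt_le_iff) simp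
      then show ?thesis by simp
    qed
    have "sqrt 2 ^ k \<le> 2 ^ k" using s2 by (rule power_mono) auto
    also have "(2::real) ^ k = exp (real k * ln 2)" by (simp add: exp_of_nat_mult)
    finally have "sqrt 2 ^ k * exp (- (b^2 / (4 * \<omega>^2))) \<le> exp (real k * ln 2) * exp (- (real k * L))"
      unfolding bb by (simp add: mult_right_mono)
    also have "\<dots> = exp (real k * (ln 2 - L))" by (simp add: exp_add[symmetric] algebra_simps)
    also have "\<dots> \<le> exp (ln \<delta>)"
    proof -
      have L_eq: "L = ln 4 + ln M - ln \<delta>" unfolding L_def using M1 delta by (simp add: ln_div ln_mult)
      have ln4: "ln (4::real) = 2 * ln 2"
      proof -
        have "ln ((2::real)^2) = 2 * ln 2" by (subst ln_realpow) auto
        then show ?thesis by simp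
      qed
      have lnM: "0 \<le> ln M" using M1 by simp
      have lnd: "ln \<delta> < 0" using delta by simp
      have ln2: "0 < ln (2::real)" by simp
      have "ln 2 - L \<le> - ln 2 + ln \<delta>" unfolding L_eq ln4 using lnM by linarith
      then have "real k * (ln 2 - L) \<le> real k * (- ln 2 + ln \<delta>)" using k1 by (intro mult_left_mono) auto
      also have "\<dots> \<le> real k * ln \<delta>" using k1 ln2 by (intro mult_left_mono) auto
      also have "\<dots> \<le> 1 * ln \<delta>" using k1 lnd by (intro mult_right_mono_neg) auto
      finally show ?thesis by simp
    qed
    also have "\<dots> = \<delta>" using delta by simp
    finally show ?thesis unfolding k_def .
  qed
  have a2: "\<forall>j. (a j)^2 = 1 / real CARD('m)"
  proof
    fix j show "(a j)^2 = 1 / real CARD('m)"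
      using a_def[rule_format, of j] by (elim disjE) (simp_all add: power_divide)
  qed
  have aa: "\<forall>j. \<bar>a j\<bar> = 1 / sqrt (real CARD('m))"
  proof
    fix j show "\<bar>a j\<bar> = 1 / sqrt (real CARD('m))"
      using a_def[rule_format, of j] by (elim disjE) simp_all
  qed
  have near: "\<forall>i<n. \<forall>k<n. i \<noteq> k \<longrightarrow> 5 / \<gamma>^2 * CR * real n * \<bar>x i \<bullet> x k\<bar> \<le> x k \<bullet> x k"
  proof (intro allI impI)
    fix i k assume "i < n" "k < n" "i \<noteq> k"
    then have "5 / \<gamma>^2 * CR * real n * \<bar>x k \<bullet> x i\<bar> \<le> norm (x k)^2" using near_orth by auto
    then show "5 / \<gamma>^2 * CR * real n * \<bar>x i \<bullet> x k\<bar> \<le> x k \<bullet> x k"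
      by (simp add: inner_commute power2_norm_eq_inner)
  qed
  have RN: "\<forall>i<n. \<forall>j<n. x j \<bullet> x j \<le> R^2 * (x i \<bullet> x i)"
  proof (intro allI impI)
    fix i j assume i: "i < n" and j: "j < n"
    have "norm (x j) / norm (x i) \<le> R" by (rule R_ge[OF j i])
    then have "norm (x j) \<le> R * norm (x i)" using xpos[OF i] by (simp add: divide_le_eq)
    then have "(norm (x j))^2 \<le> (R * norm (x i))^2" by (intro power_mono) auto
    then show "x j \<bullet> x j \<le> R^2 * (x i \<bullet> x i)" by (simp add: power2_norm_eq_inner power_mult_distrib)
  qed
  have alpha2: "\<forall>k<n. \<alpha> * (x k \<bullet> x k) \<le> 1/4"
  proof (intro allI impI)
    fix k assume k: "k < n"
    have "(norm (x k))^2 \<le> Rmax^2" using Rmax_ge[OF k] by (intro power_mono) auto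
    then have "\<alpha> * (norm (x k))^2 \<le> \<alpha> * Rmax^2" using alpha_pos by (intro mult_left_mono) auto
    then show "\<alpha> * (x k \<bullet> x k) \<le> 1/4" using aR by (simp add: power2_norm_eq_inner)
  qed
  show ?thesis
  proof (intro bexI conjI)
    show "{W. norm W \<le> b} \<in> sets (init_measure \<omega> :: (real^'d^'m) measure)" by (rule Esets)
    show "1 - \<delta> \<le> measure (init_measure \<omega> :: (real^'d^'m) measure) {W. norm W \<le> b}"
      using tail small by linarith
    show "\<forall>W0\<in>{W. norm W \<le> b}. \<forall>t. \<forall>i<n. \<forall>j<n.
              deriv logistic (y i * net \<phi> a (gd_iter (emp_risk \<phi> a n x y) \<alpha> W0 t) (x i))
              / deriv logistic (y j * net \<phi> a (gd_iter (emp_risk \<phi> a n x y) \<alpha> W0 t) (x j))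
              \<le> CR"
    proof
      fix W0 :: "real^'d^'m" assume W0: "W0 \<in> {W. norm W \<le> b}"
      have init: "\<forall>k<n. \<bar>net \<phi> a W0 (x k)\<bar> \<le> 1/2"
      proof (intro allI impI)
        fix k assume k: "k < n"
        have "\<bar>net \<phi> a W0 (x k)\<bar> \<le> norm W0 * norm (x k)" by (rule net_bound[OF act aa])
        also have "\<dots> \<le> b * Rmax" using W0 Rmax_ge[OF k] b0 by (intro mult_mono) auto
        finally show "\<bar>net \<phi> a W0 (x k)\<bar> \<le> 1/2" using bR by linarith
      qed
      show "\<forall>t. \<forall>i<n. \<forall>j<n.
              deriv logistic (y i * net \<phi> a (gd_iter (emp_risk \<phi> a n x y) \<alpha> W0 t) (x i))
              / deriv logistic (y j * net \<phi> a (gd_iter (emp_risk \<phi> a n x y) \<alpha> W0 t) (x j))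
              \<le> CR"
        by (rule det_main[OF act a2 y_def n_pos CR_def near RN less_imp_le[OF alpha_pos] alpha2 init])
    qed
  qed
qed


end
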